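(* Let $(\mathbb{X},\dagger)$ be a Moore-Penrose dagger additive category, and let $\begin{bmatrix}\alpha&\beta\\ \beta^\dagger&\delta\end{bmatrix}:B\oplus C\to B\oplus C$ be a $\dagger$-positive map. Then a map $m:B\to C$ is a conditional generator of this $\dagger$-positive map if and only if $m\circ\alpha=\beta^\dagger$.
   Context: A dagger additive category is a dagger category (contravariant identity-on-objects involutive functor $\dagger$) whose hom-sets are abelian groups with bilinear composition and additive $\dagger$, having a zero object and finite biproducts whose projections $\pi_j$ and injections $\iota_j$ satisfy $\pi_j^\dagger=\iota_j$. Maps between biproducts are written as matrices; composition is matrix multiplication and $\dagger$ is transpose with entrywise $\dagger$. An endomorphism $p$ is $\dagger$-positive if $p=\phi^\dagger\circ\phi$ for some map $\phi$. A Moore-Penrose inverse of $f:A\to B$ is a map $f^\circ:B\to A$ with $f f^\circ f=f$, $f^\circ f f^\circ=f^\circ$, $(f f^\circ)^\dagger=f f^\circ$, $(f^\circ f)^\dagger=f^\circ f$; a Moore-Penrose dagger additive category is one in which every map has a Moore-Penrose inverse. A conditional generator for a $\dagger$-positive map $\begin{bmatrix}\alpha&\beta\\ \beta^\dagger&\delta\end{bmatrix}:B\oplus C\to B\oplus C$ (with $\alpha:B\to B$, $\beta:C\to B$, $\delta:C\to C$) is a map $m:B\to C$ with (i) $m\circ\alpha=\beta^\dagger$ and (ii) $\delta-m\circ\beta$ is $\dagger$-positive. *)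

theory Defs
  imports Main
begin

text \<open>A dagger additive category, presented concretely: objects of type 'o,
  morphisms of type 'm, hom-sets given by hom A B (pairwise disjoint),
  composition cmp g f = g after f, chosen zero object and chosen binary
  biproducts (binary biproducts plus a zero object give all finite biproducts).\<close>

record ('o, 'm) dac =
  hom  :: "'o \<Rightarrow> 'o \<Rightarrow> 'm set"
  cmp  :: "'m \<Rightarrow> 'm \<Rightarrow> 'm"
  idm  :: "'o \<Rightarrow> 'm"
  dag  :: "'m \<Rightarrow> 'm"
  pls  :: "'m \<Rightarrow> 'm \<Rightarrow> 'm"
  neg  :: "'m \<Rightarrow> 'm"
  zro  :: "'o \<Rightarrow> 'o \<Rightarrow> 'm"
  zobj :: "'o"
  bp   :: "'o \<Rightarrow> 'o \<Rightarrow> 'o"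
  pr1  :: "'o \<Rightarrow> 'o \<Rightarrow> 'm"
  pr2  :: "'o \<Rightarrow> 'o \<Rightarrow> 'm"
  in1  :: "'o \<Rightarrow> 'o \<Rightarrow> 'm"
  in2  :: "'o \<Rightarrow> 'o \<Rightarrow> 'm"

definition is_category :: "('o, 'm, 'z) dac_scheme \<Rightarrow> bool" where
  "is_category X \<longleftrightarrow>
     (\<forall>A B A' B' f. f \<in> hom X A B \<longrightarrow> f \<in> hom X A' B' \<longrightarrow> A = A' \<and> B = B') \<and>
     (\<forall>A. idm X A \<in> hom X A A) \<and>
     (\<forall>A B C f g. f \<in> hom X A B \<longrightarrow> g \<in> hom X B C \<longrightarrow> cmp X g f \<in> hom X A C) \<and>
     (\<forall>A B f. f \<in> hom X A B \<longrightarrow> cmp X f (idm X A) = f \<and> cmp X (idm X B) f = f) \<and>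
     (\<forall>A B C D f g h. f \<in> hom X A B \<longrightarrow> g \<in> hom X B C \<longrightarrow> h \<in> hom X C D \<longrightarrow>
        cmp X h (cmp X g f) = cmp X (cmp X h g) f)"

definition is_dagger :: "('o, 'm, 'z) dac_scheme \<Rightarrow> bool" where
  "is_dagger X \<longleftrightarrow>
     (\<forall>A B f. f \<in> hom X A B \<longrightarrow> dag X f \<in> hom X B A \<and> dag X (dag X f) = f) \<and>
     (\<forall>A. dag X (idm X A) = idm X A) \<and>
     (\<forall>A B C f g. f \<in> hom X A B \<longrightarrow> g \<in> hom X B C \<longrightarrow>
        dag X (cmp X g f) = cmp X (dag X f) (dag X g))"

definition is_additive :: "('o, 'm, 'z) dac_scheme \<Rightarrow> bool" where
  "is_additive X \<longleftrightarrow>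
     (\<forall>A B. zro X A B \<in> hom X A B) \<and>
     (\<forall>A B f g. f \<in> hom X A B \<longrightarrow> g \<in> hom X A B \<longrightarrow>
        pls X f g \<in> hom X A B \<and> neg X f \<in> hom X A B \<and> pls X f g = pls X g f \<and>
        pls X f (zro X A B) = f \<and> pls X f (neg X f) = zro X A B) \<and>
     (\<forall>A B f g h. f \<in> hom X A B \<longrightarrow> g \<in> hom X A B \<longrightarrow> h \<in> hom X A B \<longrightarrow>
        pls X (pls X f g) h = pls X f (pls X g h)) \<and>
     (\<forall>A B C f f' g. f \<in> hom X A B \<longrightarrow> f' \<in> hom X A B \<longrightarrow> g \<in> hom X B C \<longrightarrow>
        cmp X g (pls X f f') = pls X (cmp X g f) (cmp X g f')) \<and>
     (\<forall>A B C f g g'. f \<in> hom X A B \<longrightarrow> g \<in> hom X B C \<longrightarrow> g' \<in> hom X B C \<longrightarrow>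
        cmp X (pls X g g') f = pls X (cmp X g f) (cmp X g' f)) \<and>
     (\<forall>A B f g. f \<in> hom X A B \<longrightarrow> g \<in> hom X A B \<longrightarrow>
        dag X (pls X f g) = pls X (dag X f) (dag X g))"

definition has_dagger_biproducts :: "('o, 'm, 'z) dac_scheme \<Rightarrow> bool" where
  "has_dagger_biproducts X \<longleftrightarrow>
     (\<forall>A. hom X (zobj X) A = {zro X (zobj X) A} \<and> hom X A (zobj X) = {zro X A (zobj X)}) \<and>
     (\<forall>A B. pr1 X A B \<in> hom X (bp X A B) A \<and> pr2 X A B \<in> hom X (bp X A B) B \<and>
            in1 X A B \<in> hom X A (bp X A B) \<and> in2 X A B \<in> hom X B (bp X A B) \<and>
            cmp X (pr1 X A B) (in1 X A B) = idm X A \<and>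
            cmp X (pr2 X A B) (in2 X A B) = idm X B \<and>
            cmp X (pr1 X A B) (in2 X A B) = zro X B A \<and>
            cmp X (pr2 X A B) (in1 X A B) = zro X A B \<and>
            pls X (cmp X (in1 X A B) (pr1 X A B)) (cmp X (in2 X A B) (pr2 X A B))
              = idm X (bp X A B) \<and>
            dag X (pr1 X A B) = in1 X A B \<and> dag X (pr2 X A B) = in2 X A B)"

definition dagger_additive_category :: "('o, 'm, 'z) dac_scheme \<Rightarrow> bool" where
  "dagger_additive_category X \<longleftrightarrow>
     is_category X \<and> is_dagger X \<and> is_additive X \<and> has_dagger_biproducts X"

definition moore_penrose_inverse :: "('o, 'm, 'z) dac_scheme \<Rightarrow> 'm \<Rightarrow> 'm \<Rightarrow> bool" where
  "moore_penrose_inverse X f g \<longleftrightarrow>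
     cmp X f (cmp X g f) = f \<and> cmp X g (cmp X f g) = g \<and>
     dag X (cmp X f g) = cmp X f g \<and> dag X (cmp X g f) = cmp X g f"

definition MP_dagger_additive_category :: "('o, 'm, 'z) dac_scheme \<Rightarrow> bool" where
  "MP_dagger_additive_category X \<longleftrightarrow> dagger_additive_category X \<and>
     (\<forall>A B f. f \<in> hom X A B \<longrightarrow> (\<exists>g \<in> hom X B A. moore_penrose_inverse X f g))"

definition dagger_positive :: "('o, 'm, 'z) dac_scheme \<Rightarrow> 'o \<Rightarrow> 'm \<Rightarrow> bool" where
  "dagger_positive X A p \<longleftrightarrow> p \<in> hom X A A \<and>
     (\<exists>D phi. phi \<in> hom X A D \<and> p = cmp X (dag X phi) phi)"

definition block :: "('o, 'm, 'z) dac_scheme \<Rightarrow> 'o \<Rightarrow> 'o \<Rightarrow> 'm \<Rightarrow> 'm \<Rightarrow> 'm \<Rightarrow> 'm \<Rightarrow> 'm" where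
  "block X B C a b c d =
     pls X (pls X (cmp X (in1 X B C) (cmp X a (pr1 X B C)))
                  (cmp X (in1 X B C) (cmp X b (pr2 X B C))))
           (pls X (cmp X (in2 X B C) (cmp X c (pr1 X B C)))
                  (cmp X (in2 X B C) (cmp X d (pr2 X B C))))"

definition conditional_generator ::
  "('o, 'm, 'z) dac_scheme \<Rightarrow> 'o \<Rightarrow> 'o \<Rightarrow> 'm \<Rightarrow> 'm \<Rightarrow> 'm \<Rightarrow> 'm \<Rightarrow> bool" where
  "conditional_generator X B C a b d m \<longleftrightarrow> m \<in> hom X B C \<and>
     cmp X m a = dag X b \<and>
     dagger_positive X C (pls X d (neg X (cmp X m b)))"

end

theory Submission
  imports Defs
begin

context
  fixes X :: "('o, 'm, 'z) dac_scheme"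
  assumes DAC: "dagger_additive_category X"
begin

lemma C: "is_category X" and Dg: "is_dagger X" and Ad: "is_additive X"
  and Bp: "has_dagger_biproducts X"
  using DAC unfolding dagger_additive_category_def by auto

lemmas Cp = C[unfolded is_category_def]
lemmas Dp = Dg[unfolded is_dagger_def]
lemmas Ap = Ad[unfolded is_additive_def]
lemmas Bpp = Bp[unfolded has_dagger_biproducts_def, THEN conjunct2, rule_format]

lemmas cmp_hom = Cp[THEN conjunct2, THEN conjunct2, THEN conjunct1, rule_format]
lemmas assoc = Cp[THEN conjunct2, THEN conjunct2, THEN conjunct2, THEN conjunct2, rule_format]
lemmas idr = Cp[THEN conjunct2, THEN conjunct2, THEN conjunct2, THEN conjunct1, rule_format, THEN conjunct1]
lemmas idl = Cp[THEN conjunct2, THEN conjunct2, THEN conjunct2, THEN conjunct1, rule_format, THEN conjunct2]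
lemmas dag_hom = Dp[THEN conjunct1, rule_format, THEN conjunct1]
lemmas dag_dag = Dp[THEN conjunct1, rule_format, THEN conjunct2]
lemmas dag_cmp = Dp[THEN conjunct2, THEN conjunct2, rule_format]
lemmas zro_hom = Ap[THEN conjunct1, rule_format]
lemmas pls_hom = Ap[THEN conjunct2, THEN conjunct1, rule_format, THEN conjunct1]
lemmas neg_hom0 = Ap[THEN conjunct2, THEN conjunct1, rule_format, THEN conjunct2, THEN conjunct1]
lemmas comm = Ap[THEN conjunct2, THEN conjunct1, rule_format, THEN conjunct2, THEN conjunct2, THEN conjunct1]
lemmas zr0 = Ap[THEN conjunct2, THEN conjunct1, rule_format, THEN conjunct2, THEN conjunct2, THEN conjunct2, THEN conjunct1]
lemmas ninv0 = Ap[THEN conjunct2, THEN conjunct1, rule_format, THEN conjunct2, THEN conjunct2, THEN conjunct2, THEN conjunct2]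
lemmas passoc = Ap[THEN conjunct2, THEN conjunct2, THEN conjunct1, rule_format]
lemmas dr = Ap[THEN conjunct2, THEN conjunct2, THEN conjunct2, THEN conjunct1, rule_format]
lemmas dl = Ap[THEN conjunct2, THEN conjunct2, THEN conjunct2, THEN conjunct2, THEN conjunct1, rule_format]
lemmas dag_pls = Ap[THEN conjunct2, THEN conjunct2, THEN conjunct2, THEN conjunct2, THEN conjunct2, rule_format]

lemma zr: "f \<in> hom X A B \<Longrightarrow> pls X f (zro X A B) = f"
  by (rule zr0[of f A B f]) auto
lemma ninv: "f \<in> hom X A B \<Longrightarrow> pls X f (neg X f) = zro X A B"
  by (rule ninv0[of f A B f]) auto
lemma neg_hom: "f \<in> hom X A B \<Longrightarrow> neg X f \<in> hom X A B"
  by (rule neg_hom0[of f A B f]) auto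

lemmas pr1_hom = Bpp[THEN conjunct1]
lemmas pr2_hom = Bpp[THEN conjunct2, THEN conjunct1]
lemmas in1_hom = Bpp[THEN conjunct2, THEN conjunct2, THEN conjunct1]
lemmas in2_hom = Bpp[THEN conjunct2, THEN conjunct2, THEN conjunct2, THEN conjunct1]
lemmas p1i1 = Bpp[THEN conjunct2, THEN conjunct2, THEN conjunct2, THEN conjunct2, THEN conjunct1]
lemmas p2i2 = Bpp[THEN conjunct2, THEN conjunct2, THEN conjunct2, THEN conjunct2, THEN conjunct2, THEN conjunct1]
lemmas p1i2 = Bpp[THEN conjunct2, THEN conjunct2, THEN conjunct2, THEN conjunct2, THEN conjunct2, THEN conjunct2, THEN conjunct1]
lemmas p2i1 = Bpp[THEN conjunct2, THEN conjunct2, THEN conjunct2, THEN conjunct2, THEN conjunct2, THEN conjunct2, THEN conjunct2, THEN conjunct1]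
lemmas dpr1 = Bpp[THEN conjunct2, THEN conjunct2, THEN conjunct2, THEN conjunct2, THEN conjunct2, THEN conjunct2, THEN conjunct2, THEN conjunct2, THEN conjunct2, THEN conjunct1]
lemmas dpr2 = Bpp[THEN conjunct2, THEN conjunct2, THEN conjunct2, THEN conjunct2, THEN conjunct2, THEN conjunct2, THEN conjunct2, THEN conjunct2, THEN conjunct2, THEN conjunct2]

lemma din1: "dag X (in1 X A B) = pr1 X A B" using dag_dag[OF pr1_hom] dpr1 by metis
lemma din2: "dag X (in2 X A B) = pr2 X A B" using dag_dag[OF pr2_hom] dpr2 by metis

lemma zl: assumes "f \<in> hom X A B" shows "pls X (zro X A B) f = f"
  using comm[OF zro_hom assms] zr[OF assms] by simp

lemma cancel: assumes "x \<in> hom X A B" "y \<in> hom X A B" "z \<in> hom X A B" "pls X x y = pls X x z"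
  shows "y = z"
proof -
  have nx: "neg X x \<in> hom X A B" using neg_hom[OF assms(1)] .
  have e: "pls X (neg X x) x = zro X A B" using comm[OF nx assms(1)] ninv[OF assms(1)] by simp
  have "y = pls X (pls X (neg X x) x) y" using e zl[OF assms(2)] by simp
  also have "\<dots> = pls X (neg X x) (pls X x y)" using passoc[OF nx assms(1,2)] .
  also have "\<dots> = pls X (neg X x) (pls X x z)" using assms by simp
  also have "\<dots> = pls X (pls X (neg X x) x) z" using passoc[OF nx assms(1,3)] by simp
  also have "\<dots> = z" using e zl[OF assms(3)] by simp
  finally show ?thesis .
qed

lemma uniq: assumes "x \<in> hom X A B" "y \<in> hom X A B" "pls X x y = zro X A B" shows "y = neg X x"
  using cancel[OF assms(1,2) neg_hom[OF assms(1)]] assms(3) ninv[OF assms(1)] by simp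

lemma self0: assumes "x \<in> hom X A B" "pls X x x = x" shows "x = zro X A B"
  using cancel[OF assms(1) assms(1) zro_hom] assms(2) zr[OF assms(1)] by simp

lemma cz_r: assumes "g \<in> hom X B D" shows "cmp X g (zro X A B) = zro X A D"
proof -
  have h: "cmp X g (zro X A B) \<in> hom X A D" using cmp_hom[OF zro_hom assms] .
  have "pls X (cmp X g (zro X A B)) (cmp X g (zro X A B)) = cmp X g (zro X A B)"
    using dr[OF zro_hom zro_hom assms, of A] zr[OF zro_hom, of A B] by simp
  thus ?thesis using self0 h by blast
qed

lemma cz_l: assumes "f \<in> hom X A B" shows "cmp X (zro X B D) f = zro X A D"
proof -
  have h: "cmp X (zro X B D) f \<in> hom X A D" using cmp_hom[OF assms zro_hom] .
  have "pls X (cmp X (zro X B D) f) (cmp X (zro X B D) f) = cmp X (zro X B D) f"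
    using dl[OF assms zro_hom zro_hom, of D] zr[OF zro_hom, of B D] by simp
  thus ?thesis using self0 h by blast
qed

lemma dag_zro: "dag X (zro X A B) = zro X B A"
proof -
  have h: "dag X (zro X A B) \<in> hom X B A" using dag_hom[OF zro_hom] .
  have "pls X (dag X (zro X A B)) (dag X (zro X A B)) = dag X (zro X A B)"
    using dag_pls[OF zro_hom zro_hom, of A B] zr[OF zro_hom, of A B] by simp
  thus ?thesis using self0 h by blast
qed

lemma cn_r: assumes "f \<in> hom X A B" "g \<in> hom X B D"
  shows "cmp X g (neg X f) = neg X (cmp X g f)"
proof -
  have "pls X (cmp X g f) (cmp X g (neg X f)) = zro X A D"
    using dr[OF assms(1) neg_hom[OF assms(1)] assms(2)] ninv[OF assms(1)] cz_r[OF assms(2)] by simp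
  thus ?thesis using uniq cmp_hom[OF assms] cmp_hom[OF neg_hom[OF assms(1)] assms(2)] by blast
qed

lemma cn_l: assumes "f \<in> hom X A B" "g \<in> hom X B D"
  shows "cmp X (neg X g) f = neg X (cmp X g f)"
proof -
  have "pls X (cmp X g f) (cmp X (neg X g) f) = zro X A D"
    using dl[OF assms(1) assms(2) neg_hom[OF assms(2)]] ninv[OF assms(2)] cz_l[OF assms(1)] by simp
  thus ?thesis using uniq cmp_hom[OF assms] cmp_hom[OF assms(1) neg_hom[OF assms(2)]] by blast
qed

lemma dag_neg: assumes "f \<in> hom X A B" shows "dag X (neg X f) = neg X (dag X f)"
proof -
  have "pls X (dag X f) (dag X (neg X f)) = zro X B A"
    using dag_pls[OF assms neg_hom[OF assms]] ninv[OF assms] dag_zro by simp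
  thus ?thesis using uniq dag_hom[OF assms] dag_hom[OF neg_hom[OF assms]] by blast
qed

lemma neg_neg: assumes "f \<in> hom X A B" shows "neg X (neg X f) = f"
proof -
  have "pls X (neg X f) f = zro X A B" using comm[OF neg_hom[OF assms] assms] ninv[OF assms] by simp
  thus ?thesis using uniq[OF neg_hom[OF assms] assms] by simp
qed

lemma grp: assumes "x \<in> hom X A B" "y \<in> hom X A B" "z \<in> hom X A B"
  shows "pls X (pls X x (neg X y)) (pls X (neg X z) y) = pls X x (neg X z)"
proof -
  have ny: "neg X y \<in> hom X A B" and nz: "neg X z \<in> hom X A B" using assms neg_hom by auto
  have "pls X (pls X x (neg X y)) (pls X (neg X z) y) = pls X x (pls X (neg X y) (pls X (neg X z) y))"
    using passoc[OF assms(1) ny pls_hom[OF nz assms(2)]] .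
  also have "\<dots> = pls X x (pls X (neg X y) (pls X y (neg X z)))"
    using comm[OF nz assms(2)] by simp
  also have "\<dots> = pls X x (pls X (pls X (neg X y) y) (neg X z))"
    using passoc[OF ny assms(2) nz] by simp
  also have "\<dots> = pls X x (neg X z)"
    using comm[OF ny assms(2)] ninv[OF assms(2)] zl[OF nz] by simp
  finally show ?thesis .
qed

lemma sand: assumes "i \<in> hom X U V" "x \<in> hom X W U" "p \<in> hom X Y W" "q \<in> hom X Z Y" "P \<in> hom X V R"
  shows "cmp X P (cmp X (cmp X i (cmp X x p)) q) = cmp X (cmp X P i) (cmp X x (cmp X p q))"
proof -
  have xp: "cmp X x p \<in> hom X Y U" using cmp_hom[OF assms(3,2)] .
  have xpq: "cmp X x (cmp X p q) \<in> hom X Z U" using cmp_hom[OF cmp_hom[OF assms(4,3)] assms(2)] .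
  have "cmp X (cmp X i (cmp X x p)) q = cmp X i (cmp X (cmp X x p) q)"
    using assoc[OF assms(4) xp assms(1)] by simp
  also have "\<dots> = cmp X i (cmp X x (cmp X p q))" using assoc[OF assms(4,3,2)] by simp
  finally have "cmp X P (cmp X (cmp X i (cmp X x p)) q) = cmp X P (cmp X i (cmp X x (cmp X p q)))" by simp
  also have "\<dots> = cmp X (cmp X P i) (cmp X x (cmp X p q))"
    using assoc[OF xpq assms(1) assms(5)] .
  finally show ?thesis .
qed

lemma dist4: assumes "t1 \<in> hom X S T" "t2 \<in> hom X S T" "t3 \<in> hom X S T" "t4 \<in> hom X S T"
  "Q \<in> hom X Z S" "P \<in> hom X T R"
  shows "cmp X P (cmp X (pls X (pls X t1 t2) (pls X t3 t4)) Q) =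
    pls X (pls X (cmp X P (cmp X t1 Q)) (cmp X P (cmp X t2 Q))) (pls X (cmp X P (cmp X t3 Q)) (cmp X P (cmp X t4 Q)))"
proof -
  have h: "cmp X t1 Q \<in> hom X Z T" "cmp X t2 Q \<in> hom X Z T" "cmp X t3 Q \<in> hom X Z T" "cmp X t4 Q \<in> hom X Z T"
    using assms cmp_hom by blast+
  have "cmp X (pls X (pls X t1 t2) (pls X t3 t4)) Q =
    pls X (pls X (cmp X t1 Q) (cmp X t2 Q)) (pls X (cmp X t3 Q) (cmp X t4 Q))"
    using dl[OF assms(5) pls_hom[OF assms(1,2)] pls_hom[OF assms(3,4)]]
      dl[OF assms(5) assms(1,2)] dl[OF assms(5) assms(3,4)] by simp
  thus ?thesis
    using dr[OF pls_hom[OF h(1,2)] pls_hom[OF h(3,4)] assms(6)]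
      dr[OF h(1,2) assms(6)] dr[OF h(3,4) assms(6)] by simp
qed

lemma blk_hom: assumes "a \<in> hom X B B" "b \<in> hom X C B" "c \<in> hom X B C" "d \<in> hom X C C"
  shows "cmp X (in1 X B C) (cmp X a (pr1 X B C)) \<in> hom X (bp X B C) (bp X B C)"
    "cmp X (in1 X B C) (cmp X b (pr2 X B C)) \<in> hom X (bp X B C) (bp X B C)"
    "cmp X (in2 X B C) (cmp X c (pr1 X B C)) \<in> hom X (bp X B C) (bp X B C)"
    "cmp X (in2 X B C) (cmp X d (pr2 X B C)) \<in> hom X (bp X B C) (bp X B C)"
  by (rule cmp_hom[OF cmp_hom[OF pr1_hom assms(1)] in1_hom] cmp_hom[OF cmp_hom[OF pr2_hom assms(2)] in1_hom]
    cmp_hom[OF cmp_hom[OF pr1_hom assms(3)] in2_hom] cmp_hom[OF cmp_hom[OF pr2_hom assms(4)] in2_hom])+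

lemma blk_ent: assumes "a \<in> hom X B B" "b \<in> hom X C B" "c \<in> hom X B C" "d \<in> hom X C C"
  shows "cmp X (pr1 X B C) (cmp X (block X B C a b c d) (in1 X B C)) = a"
    "cmp X (pr1 X B C) (cmp X (block X B C a b c d) (in2 X B C)) = b"
    "cmp X (pr2 X B C) (cmp X (block X B C a b c d) (in2 X B C)) = d"
proof -
  note H = blk_hom[OF assms]
  note R = cz_l[OF zro_hom] cz_r[OF zro_hom] idl[OF zro_hom] idr[OF zro_hom]
    cz_l[OF assms(1)] cz_l[OF assms(2)] cz_l[OF assms(3)] cz_l[OF assms(4)]
    cz_r[OF assms(1)] cz_r[OF assms(2)] cz_r[OF assms(3)] cz_r[OF assms(4)]
    idl[OF assms(1)] idl[OF assms(2)] idl[OF assms(3)] idl[OF assms(4)]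
    idr[OF assms(1)] idr[OF assms(2)] idr[OF assms(3)] idr[OF assms(4)]
    zr[OF zro_hom] zl[OF zro_hom] zr[OF assms(1)] zr[OF assms(2)] zr[OF assms(4)]
    zl[OF assms(1)] zl[OF assms(2)] zl[OF assms(4)]
  show "cmp X (pr1 X B C) (cmp X (block X B C a b c d) (in1 X B C)) = a"
    unfolding block_def
    using dist4[OF H in1_hom pr1_hom]
      sand[OF in1_hom assms(1) pr1_hom in1_hom pr1_hom] sand[OF in1_hom assms(2) pr2_hom in1_hom pr1_hom]
      sand[OF in2_hom assms(3) pr1_hom in1_hom pr1_hom] sand[OF in2_hom assms(4) pr2_hom in1_hom pr1_hom]
    by (simp add: p1i1 p1i2 p2i1 R)
  show "cmp X (pr1 X B C) (cmp X (block X B C a b c d) (in2 X B C)) = b"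
    unfolding block_def
    using dist4[OF H in2_hom pr1_hom]
      sand[OF in1_hom assms(1) pr1_hom in2_hom pr1_hom] sand[OF in1_hom assms(2) pr2_hom in2_hom pr1_hom]
      sand[OF in2_hom assms(3) pr1_hom in2_hom pr1_hom] sand[OF in2_hom assms(4) pr2_hom in2_hom pr1_hom]
    by (simp add: p1i1 p1i2 p2i2 R)
  show "cmp X (pr2 X B C) (cmp X (block X B C a b c d) (in2 X B C)) = d"
    unfolding block_def
    using dist4[OF H in2_hom pr2_hom]
      sand[OF in1_hom assms(1) pr1_hom in2_hom pr2_hom] sand[OF in1_hom assms(2) pr2_hom in2_hom pr2_hom]
      sand[OF in2_hom assms(3) pr1_hom in2_hom pr2_hom] sand[OF in2_hom assms(4) pr2_hom in2_hom pr2_hom]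
    by (simp add: p2i1 p1i2 p2i2 R)
qed

lemma gen: assumes "phi \<in> hom X S D" "q \<in> hom X U S" "r \<in> hom X W S"
  shows "cmp X (dag X r) (cmp X (cmp X (dag X phi) phi) q) = cmp X (dag X (cmp X phi r)) (cmp X phi q)"
proof -
  have dp: "dag X phi \<in> hom X D S" "dag X r \<in> hom X S W" using assms dag_hom by auto
  have "cmp X (dag X (cmp X phi r)) (cmp X phi q) = cmp X (cmp X (dag X r) (dag X phi)) (cmp X phi q)"
    using dag_cmp[OF assms(3,1)] by simp
  also have "\<dots> = cmp X (dag X r) (cmp X (dag X phi) (cmp X phi q))"
    using assoc[OF cmp_hom[OF assms(2,1)] dp] by simp
  also have "\<dots> = cmp X (dag X r) (cmp X (cmp X (dag X phi) phi) q)"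
    using assoc[OF assms(2,1) dp(1)] by simp
  finally show ?thesis by simp
qed

lemma main_aux:
  assumes ha: "a \<in> hom X B B" and hb: "b \<in> hom X C B" and hd: "d \<in> hom X C C"
    and pos: "dagger_positive X (bp X B C) (block X B C a b (dag X b) d)"
    and hm: "m \<in> hom X B C" and ma: "cmp X m a = dag X b"
  shows "dagger_positive X C (pls X d (neg X (cmp X m b)))"
proof -
  obtain D phi where phi: "phi \<in> hom X (bp X B C) D"
    and blk: "block X B C a b (dag X b) d = cmp X (dag X phi) phi"
    using pos unfolding dagger_positive_def by blast
  have hc: "dag X b \<in> hom X B C" using dag_hom[OF hb] .
  note E = blk_ent[OF ha hb hc hd, unfolded blk]
  define p1 where "p1 = cmp X phi (in1 X B C)"
  define p2 where "p2 = cmp X phi (in2 X B C)"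
  have p1: "p1 \<in> hom X B D" unfolding p1_def using cmp_hom[OF in1_hom phi] .
  have p2: "p2 \<in> hom X C D" unfolding p2_def using cmp_hom[OF in2_hom phi] .
  have dp1: "dag X p1 \<in> hom X D B" using dag_hom[OF p1] .
  have dp2: "dag X p2 \<in> hom X D C" using dag_hom[OF p2] .
  have dm: "dag X m \<in> hom X C B" using dag_hom[OF hm] .
  have ea: "a = cmp X (dag X p1) p1"
    using E(1) gen[OF phi in1_hom in1_hom] unfolding p1_def by (simp add: din1)
  have eb: "b = cmp X (dag X p1) p2"
    using E(2) gen[OF phi in2_hom in1_hom] unfolding p1_def p2_def by (simp add: din1)
  have ed: "d = cmp X (dag X p2) p2"
    using E(3) gen[OF phi in2_hom in2_hom] unfolding p2_def by (simp add: din2)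
  have edb: "dag X b = cmp X (dag X p2) p1"
    using eb dag_cmp[OF p2 dp1] dag_dag[OF p1] by simp
  define e where "e = cmp X p1 (dag X m)"
  have he: "e \<in> hom X C D" unfolding e_def using cmp_hom[OF dm p1] .
  have de: "dag X e = cmp X m (dag X p1)"
    unfolding e_def using dag_cmp[OF dm p1] dag_dag[OF hm] by simp
  have hde: "dag X e \<in> hom X D C" using dag_hom[OF he] .
  have hne: "neg X e \<in> hom X C D" using neg_hom[OF he] .
  have hnde: "neg X (dag X e) \<in> hom X D C" using neg_hom[OF hde] .
  define psi where "psi = pls X p2 (neg X e)"
  have hpsi: "psi \<in> hom X C D" unfolding psi_def using pls_hom[OF p2 hne] .
  have dpsi: "dag X psi = pls X (dag X p2) (neg X (dag X e))"
    unfolding psi_def using dag_pls[OF p2 hne] dag_neg[OF he] by simp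
  have t1: "cmp X (dag X p2) (neg X e) = neg X (cmp X (dag X b) (dag X m))"
  proof -
    have "cmp X (dag X p2) e = cmp X (cmp X (dag X p2) p1) (dag X m)"
      unfolding e_def using assoc[OF dm p1 dp2] .
    thus ?thesis using cn_r[OF he dp2] edb by simp
  qed
  have t2: "cmp X (neg X (dag X e)) p2 = neg X (cmp X m b)"
  proof -
    have "cmp X (dag X e) p2 = cmp X m (cmp X (dag X p1) p2)"
      unfolding de using assoc[OF p2 dp1 hm] by simp
    thus ?thesis using cn_l[OF p2 hde] eb by simp
  qed
  have t3: "cmp X (neg X (dag X e)) (neg X e) = cmp X (dag X b) (dag X m)"
  proof -
    have "cmp X (dag X e) e = cmp X m (cmp X (dag X p1) (cmp X p1 (dag X m)))"
      unfolding de using assoc[OF cmp_hom[OF dm p1] dp1 hm] by (simp add: e_def)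
    also have "\<dots> = cmp X m (cmp X a (dag X m))"
      using assoc[OF dm p1 dp1] ea by simp
    also have "\<dots> = cmp X (dag X b) (dag X m)"
      using assoc[OF dm ha hm] ma by simp
    finally have "cmp X (dag X e) e = cmp X (dag X b) (dag X m)" .
    moreover have "cmp X (neg X (dag X e)) (neg X e) = neg X (neg X (cmp X (dag X e) e))"
      using cn_l[OF hne hde] cn_r[OF he hde] by simp
    ultimately show ?thesis using neg_neg[OF cmp_hom[OF he hde]] by simp
  qed
  have "cmp X (dag X psi) psi =
    pls X (pls X (cmp X (dag X p2) p2) (cmp X (dag X p2) (neg X e)))
          (pls X (cmp X (neg X (dag X e)) p2) (cmp X (neg X (dag X e)) (neg X e)))"
    unfolding dpsi using dl[OF hpsi dp2 hnde] dr[OF p2 hne dp2] dr[OF p2 hne hnde]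
    unfolding psi_def by simp
  also have "\<dots> = pls X (pls X d (neg X (cmp X (dag X b) (dag X m)))) (pls X (neg X (cmp X m b)) (cmp X (dag X b) (dag X m)))"
    using t1 t2 t3 ed by simp
  also have "\<dots> = pls X d (neg X (cmp X m b))"
    using grp[OF hd cmp_hom[OF dm hc] cmp_hom[OF hb hm]] .
  finally have fin: "pls X d (neg X (cmp X m b)) = cmp X (dag X psi) psi" by simp
  have "pls X d (neg X (cmp X m b)) \<in> hom X C C"
    using pls_hom[OF hd neg_hom[OF cmp_hom[OF hb hm]]] .
  thus ?thesis unfolding dagger_positive_def using fin hpsi by blast
qed

end

theorem mainTheorem9:
  fixes X :: "('o, 'm, 'z) dac_scheme"
  assumes "MP_dagger_additive_category X"
    and "a \<in> hom X B B" and "b \<in> hom X C B" and "d \<in> hom X C C"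
    and "dagger_positive X (bp X B C) (block X B C a b (dag X b) d)"
    and "m \<in> hom X B C"
  shows "conditional_generator X B C a b d m \<longleftrightarrow> cmp X m a = dag X b"
proof
  assume "conditional_generator X B C a b d m"
  thus "cmp X m a = dag X b" unfolding conditional_generator_def by simp
next
  assume ma: "cmp X m a = dag X b"
  have DAC: "dagger_additive_category X"
    using assms(1) unfolding MP_dagger_additive_category_def by simp
  show "conditional_generator X B C a b d m"
    unfolding conditional_generator_def
    using assms(6) ma main_aux[OF DAC assms(2,3,4,5,6) ma] by simp
qed

end
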